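(* Let $(M,d)$ be a pointed metric space, let $\mu\in ba(\widetilde M)$ be optimal with $\|\mu\|=1$, let $\alpha>0$, and let $f\in B_{\mathrm{Lip}_0(M)}$ satisfy $(\Phi^*\mu)(f)>1-\alpha^2$. Let $A=\{(x,y)\in\widetilde M: f(m_{x,y})\ge1-\alpha\}$. Then $\mu(A)\ge1-\alpha$.
   Context: $M$ has base point $0$; $\mathrm{Lip}_0(M)$ is the real Banach space of Lipschitz $f\colon M\to\mathbb R$ with $f(0)=0$, normed by the best Lipschitz constant, with unit ball $B_{\mathrm{Lip}_0(M)}$. $\widetilde M=\{(x,y)\in M\times M:x\ne y\}$ and $f(m_{x,y})=(f(x)-f(y))/d(x,y)$. $ba(\widetilde M)$ is the Banach space of bounded finitely additive signed measures on the power set of $\widetilde M$ with norm $|\mu|(\widetilde M)$. $\Phi f(x,y)=(f(x)-f(y))/d(x,y)$ and $(\Phi^*\mu)(f)=\int_{\widetilde M}\Phi f\,d\mu$. A measure $\mu\in ba(\widetilde M)$ is called optimal if it is positive and $\|\Phi^*\mu\|=\|\mu\|$. *)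

theory Defs
  imports "HOL-Analysis.Analysis"
begin

definition Mt :: "('a \<times> 'a) set" where
  "Mt = {(x, y). x \<noteq> y}"

definition lip0_ball :: "'a::metric_space \<Rightarrow> ('a \<Rightarrow> real) set" where
  "lip0_ball z = {f. f z = 0 \<and> 1-lipschitz_on UNIV f}"

text \<open>Phi f (x,y) = (f x - f y) / d(x,y), i.e. f(m_{x,y}).\<close>
definition Phi :: "('a::metric_space \<Rightarrow> real) \<Rightarrow> 'a \<times> 'a \<Rightarrow> real" where
  "Phi f p = (f (fst p) - f (snd p)) / dist (fst p) (snd p)"

definition fin_partition :: "'b set \<Rightarrow> 'b set set \<Rightarrow> bool" where
  "fin_partition S P \<longleftrightarrow> finite P \<and> \<Union>P = S \<and> {} \<notin> P \<and>
     (\<forall>A\<in>P. \<forall>B\<in>P. A \<noteq> B \<longrightarrow> A \<inter> B = {})"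

definition fin_additive_on :: "'b set \<Rightarrow> ('b set \<Rightarrow> real) \<Rightarrow> bool" where
  "fin_additive_on S \<mu> \<longleftrightarrow>
     (\<forall>A B. A \<subseteq> S \<longrightarrow> B \<subseteq> S \<longrightarrow> A \<inter> B = {} \<longrightarrow> \<mu> (A \<union> B) = \<mu> A + \<mu> B)"

definition total_var :: "'b set \<Rightarrow> ('b set \<Rightarrow> real) \<Rightarrow> real" where
  "total_var S \<mu> = (SUP P\<in>{P. fin_partition S P}. \<Sum>A\<in>P. \<bar>\<mu> A\<bar>)"

definition is_ba :: "'b set \<Rightarrow> ('b set \<Rightarrow> real) \<Rightarrow> bool" where
  "is_ba S \<mu> \<longleftrightarrow> fin_additive_on S \<mu> \<and>
     bdd_above ((\<lambda>P. \<Sum>A\<in>P. \<bar>\<mu> A\<bar>) ` {P. fin_partition S P})"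

text \<open>Integral of a bounded function g over S with respect to a bounded finitely additive
  measure: limit of Riemann-type sums over finite partitions on whose pieces the
  oscillation of g tends to 0 (the standard integral of bounded functions w.r.t. ba measures).\<close>
definition ba_integral_is :: "'b set \<Rightarrow> ('b set \<Rightarrow> real) \<Rightarrow> ('b \<Rightarrow> real) \<Rightarrow> real \<Rightarrow> bool" where
  "ba_integral_is S \<mu> g I \<longleftrightarrow>
     (\<forall>\<epsilon>>0. \<exists>\<delta>>0. \<forall>P t. fin_partition S P \<longrightarrow>
        (\<forall>A\<in>P. \<forall>u\<in>A. \<forall>v\<in>A. \<bar>g u - g v\<bar> \<le> \<delta>) \<longrightarrow> (\<forall>A\<in>P. t A \<in> A) \<longrightarrow>
        \<bar>(\<Sum>A\<in>P. \<mu> A * g (t A)) - I\<bar> \<le> \<epsilon>)"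

definition ba_integral :: "'b set \<Rightarrow> ('b set \<Rightarrow> real) \<Rightarrow> ('b \<Rightarrow> real) \<Rightarrow> real" where
  "ba_integral S \<mu> g = (THE I. ba_integral_is S \<mu> g I)"

definition Phi_star :: "(('a::metric_space \<times> 'a) set \<Rightarrow> real) \<Rightarrow> ('a \<Rightarrow> real) \<Rightarrow> real" where
  "Phi_star \<mu> f = ba_integral Mt \<mu> (Phi f)"

definition Phi_star_norm :: "'a::metric_space \<Rightarrow> (('a \<times> 'a) set \<Rightarrow> real) \<Rightarrow> real" where
  "Phi_star_norm z \<mu> = (SUP f\<in>lip0_ball z. \<bar>Phi_star \<mu> f\<bar>)"

definition ba_norm :: "(('a \<times> 'a) set \<Rightarrow> real) \<Rightarrow> real" where
  "ba_norm \<mu> = total_var Mt \<mu>"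

definition optimal :: "'a::metric_space \<Rightarrow> (('a \<times> 'a) set \<Rightarrow> real) \<Rightarrow> bool" where
  "optimal z \<mu> \<longleftrightarrow> is_ba Mt \<mu> \<and> (\<forall>A\<subseteq>Mt. 0 \<le> \<mu> A) \<and>
     Phi_star_norm z \<mu> = ba_norm \<mu>"

end

theory Submission
  imports Defs
begin

lemma fa_empty: "fin_additive_on S \<mu> \<Longrightarrow> \<mu> {} = 0"
  unfolding fin_additive_on_def by (metis Un_empty empty_subsetI inf_bot_left add_cancel_right_right)

lemma fa_sum:
  assumes fa: "fin_additive_on S \<mu>" and fin: "finite I"
    and sub: "\<forall>i\<in>I. F i \<subseteq> S"
    and dis: "\<forall>i\<in>I. \<forall>j\<in>I. i \<noteq> j \<longrightarrow> F i \<inter> F j = {}"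
  shows "\<mu> (\<Union>i\<in>I. F i) = (\<Sum>i\<in>I. \<mu> (F i))"
  using fin sub dis
proof (induction I rule: finite_induct)
  case empty
  then show ?case using fa_empty[OF fa] by simp
next
  case (insert x I)
  have dj: "\<forall>j\<in>I. F x \<inter> F j = {}"
  proof
    fix j assume "j \<in> I"
    then have "x \<noteq> j" "j \<in> insert x I" using insert.hyps(2) by auto
    then show "F x \<inter> F j = {}" using insert.prems(2) by simp
  qed
  have d: "F x \<inter> (\<Union>i\<in>I. F i) = {}" using dj by blast
  have "\<mu> (\<Union>i\<in>insert x I. F i) = \<mu> (F x \<union> (\<Union>i\<in>I. F i))" by simp
  also have "\<dots> = \<mu> (F x) + \<mu> (\<Union>i\<in>I. F i)"
  proof -
    have s1: "F x \<subseteq> S" using insert.prems(1) by simp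
    have s2: "(\<Union>i\<in>I. F i) \<subseteq> S" using insert.prems(1) by auto
    show ?thesis using fa[unfolded fin_additive_on_def, rule_format, OF s1 s2 d] .
  qed
  also have "\<dots> = \<mu> (F x) + (\<Sum>i\<in>I. \<mu> (F i))" using insert by simp
  finally show ?case using insert by simp
qed

lemma part_sum:
  assumes fa: "fin_additive_on S \<mu>" and P: "fin_partition S P" and B: "B \<subseteq> S"
  shows "\<mu> B = (\<Sum>A\<in>P. \<mu> (A \<inter> B))"
proof -
  have "(\<Union>A\<in>P. A \<inter> B) = B" using P B unfolding fin_partition_def by blast
  moreover have "\<mu> (\<Union>A\<in>P. A \<inter> B) = (\<Sum>A\<in>P. \<mu> (A \<inter> B))"
  proof (rule fa_sum[OF fa])
    show "finite P" using P unfolding fin_partition_def by simp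
    show "\<forall>A\<in>P. A \<inter> B \<subseteq> S" using B by blast
    show "\<forall>A\<in>P. \<forall>A'\<in>P. A \<noteq> A' \<longrightarrow> A \<inter> B \<inter> (A' \<inter> B) = {}"
      using P unfolding fin_partition_def by blast
  qed
  ultimately show ?thesis by simp
qed

lemma part_sum_S:
  assumes fa: "fin_additive_on S \<mu>" and P: "fin_partition S P"
  shows "\<mu> S = (\<Sum>A\<in>P. \<mu> A)"
proof -
  have "\<mu> S = (\<Sum>A\<in>P. \<mu> (A \<inter> S))" using part_sum[OF fa P] by simp
  also have "\<dots> = (\<Sum>A\<in>P. \<mu> A)"
  proof (rule sum.cong[OF refl])
    fix A assume "A \<in> P"
    then have "A \<subseteq> S" using P unfolding fin_partition_def by blast
    then show "\<mu> (A \<inter> S) = \<mu> A" by (simp add: Int_absorb2)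
  qed
  finally show ?thesis .
qed

lemma riemann_compare:
  assumes fa: "fin_additive_on S \<mu>" and pos: "\<forall>A\<subseteq>S. 0 \<le> \<mu> A"
    and P: "fin_partition S P" and Q: "fin_partition S Q"
    and oP: "\<forall>A\<in>P. \<forall>u\<in>A. \<forall>v\<in>A. \<bar>g u - g v\<bar> \<le> d1"
    and oQ: "\<forall>A\<in>Q. \<forall>u\<in>A. \<forall>v\<in>A. \<bar>g u - g v\<bar> \<le> d2"
    and tP: "\<forall>A\<in>P. t A \<in> A" and tQ: "\<forall>A\<in>Q. s A \<in> A"
  shows "\<bar>(\<Sum>A\<in>P. \<mu> A * g (t A)) - (\<Sum>B\<in>Q. \<mu> B * g (s B))\<bar> \<le> \<mu> S * (d1 + d2)"
proof -
  have subP: "\<And>A. A \<in> P \<Longrightarrow> A \<subseteq> S" using P unfolding fin_partition_def by blast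
  have subQ: "\<And>A. A \<in> Q \<Longrightarrow> A \<subseteq> S" using Q unfolding fin_partition_def by blast
  have fP: "finite P" and fQ: "finite Q" using P Q unfolding fin_partition_def by auto
  have e1: "(\<Sum>A\<in>P. \<mu> A * g (t A)) = (\<Sum>A\<in>P. \<Sum>B\<in>Q. \<mu> (A \<inter> B) * g (t A))"
  proof (rule sum.cong[OF refl])
    fix A assume "A \<in> P"
    have "\<mu> A = (\<Sum>B\<in>Q. \<mu> (B \<inter> A))" using part_sum[OF fa Q subP[OF \<open>A \<in> P\<close>]] .
    then show "\<mu> A * g (t A) = (\<Sum>B\<in>Q. \<mu> (A \<inter> B) * g (t A))"
      by (simp add: sum_distrib_right Int_commute)
  qed
  have e2: "(\<Sum>B\<in>Q. \<mu> B * g (s B)) = (\<Sum>A\<in>P. \<Sum>B\<in>Q. \<mu> (A \<inter> B) * g (s B))"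
  proof -
    have "(\<Sum>B\<in>Q. \<mu> B * g (s B)) = (\<Sum>B\<in>Q. \<Sum>A\<in>P. \<mu> (A \<inter> B) * g (s B))"
    proof (rule sum.cong[OF refl])
      fix B assume "B \<in> Q"
      have "\<mu> B = (\<Sum>A\<in>P. \<mu> (A \<inter> B))" using part_sum[OF fa P subQ[OF \<open>B \<in> Q\<close>]] .
      then show "\<mu> B * g (s B) = (\<Sum>A\<in>P. \<mu> (A \<inter> B) * g (s B))"
        by (simp add: sum_distrib_right)
    qed
    also have "\<dots> = (\<Sum>A\<in>P. \<Sum>B\<in>Q. \<mu> (A \<inter> B) * g (s B))" by (rule sum.swap)
    finally show ?thesis .
  qed
  have "(\<Sum>A\<in>P. \<mu> A * g (t A)) - (\<Sum>B\<in>Q. \<mu> B * g (s B))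
      = (\<Sum>A\<in>P. \<Sum>B\<in>Q. \<mu> (A \<inter> B) * (g (t A) - g (s B)))"
    unfolding e1 e2 by (simp add: sum_subtractf[symmetric] right_diff_distrib)
  also have "\<bar>\<dots>\<bar> \<le> (\<Sum>A\<in>P. \<Sum>B\<in>Q. \<bar>\<mu> (A \<inter> B) * (g (t A) - g (s B))\<bar>)"
    by (rule order_trans[OF sum_abs]) (intro sum_mono sum_abs)
  also have "\<dots> \<le> (\<Sum>A\<in>P. \<Sum>B\<in>Q. \<mu> (A \<inter> B) * (d1 + d2))"
  proof (intro sum_mono)
    fix A B assume A: "A \<in> P" and B: "B \<in> Q"
    have m0: "0 \<le> \<mu> (A \<inter> B)" using pos subP[OF A] by blast
    show "\<bar>\<mu> (A \<inter> B) * (g (t A) - g (s B))\<bar> \<le> \<mu> (A \<inter> B) * (d1 + d2)"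
    proof (cases "A \<inter> B = {}")
      case True then show ?thesis using fa_empty[OF fa] by simp
    next
      case False
      then obtain u where u: "u \<in> A" "u \<in> B" by blast
      have "\<bar>g (t A) - g u\<bar> \<le> d1" using oP A tP u by blast
      moreover have "\<bar>g u - g (s B)\<bar> \<le> d2" using oQ B tQ u by blast
      ultimately have "\<bar>g (t A) - g (s B)\<bar> \<le> d1 + d2" by linarith
      then show ?thesis using m0 by (simp add: abs_mult mult_left_mono)
    qed
  qed
  also have "\<dots> = (\<Sum>A\<in>P. \<mu> A) * (d1 + d2)"
  proof -
    have "\<And>A. A \<in> P \<Longrightarrow> (\<Sum>B\<in>Q. \<mu> (A \<inter> B)) = \<mu> A"
      using part_sum[OF fa Q subP] by (simp add: Int_commute)
    then have "(\<Sum>A\<in>P. (\<Sum>B\<in>Q. \<mu> (A \<inter> B)) * (d1 + d2)) = (\<Sum>A\<in>P. \<mu> A * (d1 + d2))"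
      by (intro sum.cong) auto
    moreover have "(\<Sum>A\<in>P. \<Sum>B\<in>Q. \<mu> (A \<inter> B) * (d1 + d2)) = (\<Sum>A\<in>P. (\<Sum>B\<in>Q. \<mu> (A \<inter> B)) * (d1 + d2))"
      by (simp only: sum_distrib_right)
    moreover have "(\<Sum>A\<in>P. \<mu> A * (d1 + d2)) = (\<Sum>A\<in>P. \<mu> A) * (d1 + d2)"
      by (simp only: sum_distrib_right)
    ultimately show ?thesis by simp
  qed
  also have "\<dots> = \<mu> S * (d1 + d2)" using part_sum_S[OF fa P] by simp
  finally show ?thesis .
qed

lemma level_partition:
  fixes g :: "'b \<Rightarrow> real"
  assumes d: "d > 0" and bnd: "\<forall>u\<in>S. \<bar>g u\<bar> \<le> 1"
  shows "\<exists>P. fin_partition S P \<and> (\<forall>A\<in>P. \<forall>u\<in>A. \<forall>v\<in>A. \<bar>g u - g v\<bar> \<le> d)"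
proof -
  define k where "k u = \<lfloor>g u / d\<rfloor>" for u
  define P where "P = (\<lambda>n. {u\<in>S. k u = n}) ` (k ` S)"
  define N where "N = \<lceil>1 / d\<rceil>"
  have kb: "k ` S \<subseteq> {-N-1..N}"
  proof
    fix n assume "n \<in> k ` S"
    then obtain u where u: "u \<in> S" "n = k u" by blast
    have "\<bar>g u / d\<bar> \<le> 1 / d" using bnd u d by (simp add: abs_divide divide_right_mono)
    then have "-(1/d) \<le> g u / d" "g u / d \<le> 1/d" by linarith+
    moreover have "1/d \<le> of_int N" unfolding N_def by simp
    ultimately have "- of_int N \<le> g u / d" "g u / d \<le> of_int N" by linarith+
    then have "-N - 1 \<le> \<lfloor>g u / d\<rfloor>" "\<lfloor>g u / d\<rfloor> \<le> N"
      by (simp_all add: le_floor_iff floor_le_iff)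
    then show "n \<in> {-N-1..N}" using u unfolding k_def by simp
  qed
  have fin: "finite P" unfolding P_def
    using finite_subset[OF kb finite_atLeastAtMost_int] by simp
  have part: "fin_partition S P" unfolding fin_partition_def P_def using fin P_def by auto
  have osc: "\<forall>A\<in>P. \<forall>u\<in>A. \<forall>v\<in>A. \<bar>g u - g v\<bar> \<le> d"
  proof (intro ballI)
    fix A u v assume A: "A \<in> P" and u: "u \<in> A" and v: "v \<in> A"
    then have e: "\<lfloor>g u / d\<rfloor> = \<lfloor>g v / d\<rfloor>" unfolding P_def k_def by auto
    have "of_int \<lfloor>g u / d\<rfloor> \<le> g u / d" "g u / d < of_int \<lfloor>g u / d\<rfloor> + 1"
      "of_int \<lfloor>g v / d\<rfloor> \<le> g v / d" "g v / d < of_int \<lfloor>g v / d\<rfloor> + 1"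
      by (simp_all add: of_int_floor_le)
    then have "\<bar>g u / d - g v / d\<bar> \<le> 1" using e by linarith
    then have "\<bar>(g u - g v) / d\<bar> \<le> 1" by (simp add: diff_divide_distrib)
    then show "\<bar>g u - g v\<bar> \<le> d" using d by (simp add: abs_divide divide_le_eq)
  qed
  show ?thesis using part osc by blast
qed

lemma ba_integral_unique:
  fixes g :: "'b \<Rightarrow> real"
  assumes bnd: "\<forall>u\<in>S. \<bar>g u\<bar> \<le> 1"
    and I1: "ba_integral_is S \<mu> g I1" and I2: "ba_integral_is S \<mu> g I2"
  shows "I1 = I2"
proof (rule ccontr)
  assume ne: "I1 \<noteq> I2"
  define e where "e = \<bar>I1 - I2\<bar> / 3"
  have e: "e > 0" using ne unfolding e_def by simp
  obtain d1 where d1: "d1 > 0" and h1: "\<forall>P t. fin_partition S P \<longrightarrow>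
        (\<forall>A\<in>P. \<forall>u\<in>A. \<forall>v\<in>A. \<bar>g u - g v\<bar> \<le> d1) \<longrightarrow> (\<forall>A\<in>P. t A \<in> A) \<longrightarrow>
        \<bar>(\<Sum>A\<in>P. \<mu> A * g (t A)) - I1\<bar> \<le> e"
    using I1[unfolded ba_integral_is_def, rule_format, OF e] by blast
  obtain d2 where d2: "d2 > 0" and h2: "\<forall>P t. fin_partition S P \<longrightarrow>
        (\<forall>A\<in>P. \<forall>u\<in>A. \<forall>v\<in>A. \<bar>g u - g v\<bar> \<le> d2) \<longrightarrow> (\<forall>A\<in>P. t A \<in> A) \<longrightarrow>
        \<bar>(\<Sum>A\<in>P. \<mu> A * g (t A)) - I2\<bar> \<le> e"
    using I2[unfolded ba_integral_is_def, rule_format, OF e] by blast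
  obtain P where P: "fin_partition S P"
    and o: "\<forall>A\<in>P. \<forall>u\<in>A. \<forall>v\<in>A. \<bar>g u - g v\<bar> \<le> min d1 d2"
    using level_partition[of "min d1 d2" S g] d1 d2 bnd by auto
  define t where "t A = (SOME u. u \<in> A)" for A :: "'b set"
  have t: "\<forall>A\<in>P. t A \<in> A" using P unfolding fin_partition_def t_def by (metis ex_in_conv someI_ex)
  have o12: "\<forall>A\<in>P. \<forall>u\<in>A. \<forall>v\<in>A. \<bar>g u - g v\<bar> \<le> d1"
    "\<forall>A\<in>P. \<forall>u\<in>A. \<forall>v\<in>A. \<bar>g u - g v\<bar> \<le> d2"
    using o by simp_all
  have "\<bar>(\<Sum>A\<in>P. \<mu> A * g (t A)) - I1\<bar> \<le> e" using mp[OF mp[OF mp[OF h1[THEN spec[of _ P], THEN spec[of _ t]] P] o12(1)] t] .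
  moreover have "\<bar>(\<Sum>A\<in>P. \<mu> A * g (t A)) - I2\<bar> \<le> e" using mp[OF mp[OF mp[OF h2[THEN spec[of _ P], THEN spec[of _ t]] P] o12(2)] t] .
  ultimately have "\<bar>I1 - I2\<bar> \<le> 2 * e" by arith
  moreover have "\<And>x::real. x \<le> 2 * (x / 3) \<Longrightarrow> 0 < x / 3 \<Longrightarrow> False" by linarith
  ultimately show False using e unfolding e_def by blast
qed

lemma ba_integral_exists:
  fixes g :: "'b \<Rightarrow> real"
  assumes fa: "fin_additive_on S \<mu>" and pos: "\<forall>A\<subseteq>S. 0 \<le> \<mu> A"
    and bnd: "\<forall>u\<in>S. \<bar>g u\<bar> \<le> 1"
  shows "\<exists>I. ba_integral_is S \<mu> g I"
proof -
  define c where "c = \<mu> S"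
  have c0: "0 \<le> c" using pos unfolding c_def by auto
  define P where "P n = (SOME P. fin_partition S P \<and>
      (\<forall>A\<in>P. \<forall>u\<in>A. \<forall>v\<in>A. \<bar>g u - g v\<bar> \<le> 1 / (real n + 1)))" for n :: nat
  have P: "fin_partition S (P n) \<and>
      (\<forall>A\<in>P n. \<forall>u\<in>A. \<forall>v\<in>A. \<bar>g u - g v\<bar> \<le> 1 / (real n + 1))" for n
    unfolding P_def by (rule someI_ex, rule level_partition) (use bnd in auto)
  define t where "t A = (SOME u. u \<in> A)" for A :: "'b set"
  have t: "\<forall>A\<in>P n. t A \<in> A" for n
    using P[of n] unfolding fin_partition_def t_def by (metis ex_in_conv someI_ex)
  define J where "J n = (\<Sum>A\<in>P n. \<mu> A * g (t A))" for n
  have JJ: "\<bar>J n - J m\<bar> \<le> c * (1 / (real n + 1) + 1 / (real m + 1))" for n m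
    unfolding J_def c_def
    by (rule riemann_compare[OF fa pos conjunct1[OF P[of n]] conjunct1[OF P[of m]]
          conjunct2[OF P[of n]] conjunct2[OF P[of m]] t t])
  define I where "I = (INF n. J n + c / (real n + 1))"
  have bdd: "bdd_below (range (\<lambda>n. J n + c / (real n + 1)))"
  proof (rule bdd_belowI2)
    fix n
    have "\<bar>J n - J 0\<bar> \<le> c * (1 / (real n + 1) + 1)" using JJ[of n 0] by simp
    then have "J 0 - c * (1 / (real n + 1) + 1) \<le> J n" by linarith
    then show "J 0 - c \<le> J n + c / (real n + 1)" by (simp add: algebra_simps)
  qed
  have up: "I \<le> J m + c / (real m + 1)" for m
    unfolding I_def by (rule cINF_lower[OF bdd]) simp
  have lo: "J m - c / (real m + 1) \<le> I" for m
    unfolding I_def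
  proof (rule cINF_greatest)
    fix n
    have "\<bar>J n - J m\<bar> \<le> c / (real n + 1) + c / (real m + 1)"
      using JJ[of n m] by (simp add: algebra_simps)
    then show "J m - c / (real m + 1) \<le> J n + c / (real n + 1)" by linarith
  qed simp
  show ?thesis
  proof (rule exI[of _ I], unfold ba_integral_is_def, intro allI impI)
    fix \<epsilon> :: real assume e: "\<epsilon> > 0"
    obtain m :: nat where m: "4 * c / \<epsilon> < real m" using reals_Archimedean2 by blast
    have "4 * c < \<epsilon> * real m" using m e by (simp add: pos_divide_less_eq mult.commute)
    also have "\<dots> \<le> \<epsilon> * (real m + 1)" using e by simp
    finally have "c < \<epsilon> / 4 * (real m + 1)" by simp
    then have cm: "c / (real m + 1) \<le> \<epsilon> / 4" by (simp add: divide_le_eq)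
    define d where "d = \<epsilon> / (4 * (c + 1))"
    have d: "d > 0" unfolding d_def using e c0 by simp
    have cd: "c * d \<le> \<epsilon> / 4"
    proof -
      have "c * d = (\<epsilon> / 4) * (c / (c + 1))" unfolding d_def by (simp add: field_simps)
      also have "\<dots> \<le> (\<epsilon> / 4) * 1" using e c0 by (intro mult_left_mono) simp_all
      finally show ?thesis by simp
    qed
    show "\<exists>\<delta>>0. \<forall>Q s. fin_partition S Q \<longrightarrow>
        (\<forall>A\<in>Q. \<forall>u\<in>A. \<forall>v\<in>A. \<bar>g u - g v\<bar> \<le> \<delta>) \<longrightarrow> (\<forall>A\<in>Q. s A \<in> A) \<longrightarrow>
        \<bar>(\<Sum>A\<in>Q. \<mu> A * g (s A)) - I\<bar> \<le> \<epsilon>"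
    proof (intro exI[of _ d] conjI allI impI)
      show "d > 0" by (rule d)
      fix Q s assume Q: "fin_partition S Q"
        and oQ: "\<forall>A\<in>Q. \<forall>u\<in>A. \<forall>v\<in>A. \<bar>g u - g v\<bar> \<le> d"
        and sQ: "\<forall>A\<in>Q. s A \<in> A"
      have "\<bar>(\<Sum>A\<in>Q. \<mu> A * g (s A)) - J m\<bar> \<le> c * (d + 1 / (real m + 1))"
        unfolding J_def c_def
        by (rule riemann_compare[OF fa pos Q conjunct1[OF P[of m]] oQ conjunct2[OF P[of m]] sQ t])
      also have "\<dots> = c * d + c / (real m + 1)" by (simp add: algebra_simps)
      finally have h: "\<bar>(\<Sum>A\<in>Q. \<mu> A * g (s A)) - J m\<bar> \<le> c * d + c / (real m + 1)" .
      have "\<bar>J m - I\<bar> \<le> c / (real m + 1)" using up[of m] lo[of m] by linarith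
      then show "\<bar>(\<Sum>A\<in>Q. \<mu> A * g (s A)) - I\<bar> \<le> \<epsilon>" using h cm cd e by linarith
    qed
  qed
qed

lemma total_var_pos:
  assumes fa: "fin_additive_on S \<mu>" and pos: "\<forall>A\<subseteq>S. 0 \<le> \<mu> A"
  shows "total_var S \<mu> = \<mu> S"
proof -
  have ne: "{P. fin_partition S P} \<noteq> {}"
  proof (cases "S = {}")
    case True
    then have "fin_partition S {}" unfolding fin_partition_def by simp
    then show ?thesis by blast
  next
    case False
    then have "fin_partition S {S}" unfolding fin_partition_def by simp
    then show ?thesis by blast
  qed
  have eq: "(\<Sum>A\<in>P. \<bar>\<mu> A\<bar>) = \<mu> S" if "P \<in> {P. fin_partition S P}" for P
  proof -
    have P: "fin_partition S P" using that by simp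
    have "(\<Sum>A\<in>P. \<bar>\<mu> A\<bar>) = (\<Sum>A\<in>P. \<mu> A)"
    proof (rule sum.cong[OF refl])
      fix A assume "A \<in> P"
      then have "A \<subseteq> S" using P unfolding fin_partition_def by blast
      then show "\<bar>\<mu> A\<bar> = \<mu> A" using pos by simp
    qed
    then show ?thesis using part_sum_S[OF fa P] by simp
  qed
  have "total_var S \<mu> = (SUP P\<in>{P. fin_partition S P}. \<mu> S)"
    unfolding total_var_def by (rule SUP_cong[OF refl]) (rule eq)
  also have "\<dots> = \<mu> S" using ne by simp
  finally show ?thesis .
qed

theorem lemma3p1:
  fixes z :: "'a::metric_space" and \<mu> :: "('a \<times> 'a) set \<Rightarrow> real"
    and \<alpha> :: real and f :: "'a \<Rightarrow> real"
  assumes "optimal z \<mu>"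
    and "ba_norm \<mu> = 1"
    and "\<alpha> > 0"
    and "f \<in> lip0_ball z"
    and "Phi_star \<mu> f > 1 - \<alpha>\<^sup>2"
  shows "\<mu> {p \<in> Mt. Phi f p \<ge> 1 - \<alpha>} \<ge> 1 - \<alpha>"
proof -
  note opt = assms(1) and nrm = assms(2) and apos = assms(3) and fL = assms(4) and hI = assms(5)
  let ?S = "Mt :: ('a \<times> 'a) set"
  let ?g = "Phi f"
  define A0 where "A0 = {p \<in> ?S. Phi f p \<ge> 1 - \<alpha>}"
  have fa: "fin_additive_on ?S \<mu>" using opt unfolding optimal_def is_ba_def by blast
  have pos: "\<forall>A\<subseteq>?S. 0 \<le> \<mu> A" using opt unfolding optimal_def by blast
  have mS: "\<mu> ?S = 1" using nrm total_var_pos[OF fa pos] unfolding ba_norm_def by simp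
  have lip: "1-lipschitz_on UNIV f" using fL unfolding lip0_ball_def by blast
  have bnd: "\<forall>u\<in>?S. \<bar>?g u\<bar> \<le> 1"
  proof
    fix u assume u: "u \<in> ?S"
    obtain x y where xy: "u = (x, y)" by (cases u)
    have ne: "x \<noteq> y" using u xy unfolding Mt_def by simp
    have dpos: "dist x y > 0" using ne by simp
    have "dist (f x) (f y) \<le> 1 * dist x y" by (rule lipschitz_onD[OF lip]) simp_all
    then have "\<bar>f x - f y\<bar> \<le> dist x y" by (simp add: dist_real_def)
    then show "\<bar>?g u\<bar> \<le> 1" using dpos unfolding xy Phi_def by (simp add: abs_divide)
  qed
  obtain I where I: "ba_integral_is ?S \<mu> ?g I" using ba_integral_exists[OF fa pos bnd] by blast
  have PI: "Phi_star \<mu> f = I"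
    unfolding Phi_star_def ba_integral_def
    by (rule the_equality[where P="\<lambda>J. ba_integral_is ?S \<mu> ?g J", OF I])
       (rule ba_integral_unique[OF bnd _ I])
  define \<gamma> where "\<gamma> = I - (1 - \<alpha>\<^sup>2)"
  have gpos: "\<gamma> > 0" using hI PI unfolding \<gamma>_def by simp
  have g4: "\<gamma> / 4 > 0" using gpos by simp
  obtain d0 where d0: "d0 > 0" and h0: "\<forall>P t. fin_partition ?S P \<longrightarrow>
        (\<forall>A\<in>P. \<forall>u\<in>A. \<forall>v\<in>A. \<bar>?g u - ?g v\<bar> \<le> d0) \<longrightarrow> (\<forall>A\<in>P. t A \<in> A) \<longrightarrow>
        \<bar>(\<Sum>A\<in>P. \<mu> A * ?g (t A)) - I\<bar> \<le> \<gamma> / 4"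
    using I[unfolded ba_integral_is_def, rule_format, OF g4] by blast
  define d where "d = min d0 (\<gamma> / 4)"
  have d: "d > 0" unfolding d_def using d0 g4 by simp
  obtain P where P: "fin_partition ?S P"
    and o: "\<forall>A\<in>P. \<forall>u\<in>A. \<forall>v\<in>A. \<bar>?g u - ?g v\<bar> \<le> d"
    using level_partition[OF d bnd] by blast
  have o0: "\<forall>A\<in>P. \<forall>u\<in>A. \<forall>v\<in>A. \<bar>?g u - ?g v\<bar> \<le> d0"
    using o unfolding d_def by simp
  define t where "t A = (SOME u. u \<in> A)" for A :: "('a \<times> 'a) set"
  have t: "\<forall>A\<in>P. t A \<in> A" using P unfolding fin_partition_def t_def by (metis ex_in_conv someI_ex)
  have close: "\<bar>(\<Sum>A\<in>P. \<mu> A * ?g (t A)) - I\<bar> \<le> \<gamma> / 4"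
    using mp[OF mp[OF mp[OF h0[THEN spec[of _ P], THEN spec[of _ t]] P] o0] t] .
  have subP: "\<And>A. A \<in> P \<Longrightarrow> A \<subseteq> ?S" using P unfolding fin_partition_def by blast
  have A0S: "A0 \<subseteq> ?S" unfolding A0_def by blast
  have termb: "\<mu> A * ?g (t A) \<le> \<mu> (A \<inter> A0) + \<mu> (A \<inter> (?S - A0)) * (1 - \<alpha> + d)"
    if A: "A \<in> P" for A
  proof -
    have s1: "A \<inter> A0 \<subseteq> ?S" and s2: "A \<inter> (?S - A0) \<subseteq> ?S" using A0S by auto
    have dj: "(A \<inter> A0) \<inter> (A \<inter> (?S - A0)) = {}" by blast
    have un: "(A \<inter> A0) \<union> (A \<inter> (?S - A0)) = A" using subP[OF A] by blast
    have splt: "\<mu> A = \<mu> (A \<inter> A0) + \<mu> (A \<inter> (?S - A0))"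
      using fa[unfolded fin_additive_on_def, rule_format, OF s1 s2 dj] un by simp
    have m1: "0 \<le> \<mu> (A \<inter> A0)" using pos s1 by blast
    have m2: "0 \<le> \<mu> (A \<inter> (?S - A0))" using pos s2 by blast
    have tA: "t A \<in> ?S" using t A subP by blast
    have g1: "?g (t A) \<le> 1" using bnd tA by fastforce
    have a1: "\<mu> (A \<inter> A0) * ?g (t A) \<le> \<mu> (A \<inter> A0)"
      using mult_left_mono[OF g1 m1] by simp
    have a2: "\<mu> (A \<inter> (?S - A0)) * ?g (t A) \<le> \<mu> (A \<inter> (?S - A0)) * (1 - \<alpha> + d)"
    proof (cases "A \<inter> (?S - A0) = {}")
      case True then show ?thesis using fa_empty[OF fa] by simp
    next
      case False
      then obtain u where u: "u \<in> A" "u \<in> ?S" "u \<notin> A0" by blast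
      have "?g u < 1 - \<alpha>" using u unfolding A0_def by auto
      moreover have "\<bar>?g (t A) - ?g u\<bar> \<le> d" using o A t u by blast
      ultimately have "?g (t A) \<le> 1 - \<alpha> + d" by linarith
      then show ?thesis using m2 by (rule mult_left_mono)
    qed
    have "\<mu> A * ?g (t A) = \<mu> (A \<inter> A0) * ?g (t A) + \<mu> (A \<inter> (?S - A0)) * ?g (t A)"
      using splt by (simp add: distrib_right)
    then show ?thesis using a1 a2 by linarith
  qed
  have sum1: "(\<Sum>A\<in>P. \<mu> (A \<inter> A0)) = \<mu> A0" using part_sum[OF fa P A0S] by simp
  have sum2: "(\<Sum>A\<in>P. \<mu> (A \<inter> (?S - A0))) = \<mu> (?S - A0)"
    using part_sum[OF fa P, of "?S - A0"] by simp
  have "(\<Sum>A\<in>P. \<mu> A * ?g (t A)) \<le> (\<Sum>A\<in>P. \<mu> (A \<inter> A0) + \<mu> (A \<inter> (?S - A0)) * (1 - \<alpha> + d))"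
    by (rule sum_mono) (rule termb)
  also have "\<dots> = \<mu> A0 + \<mu> (?S - A0) * (1 - \<alpha> + d)"
    by (simp add: sum.distrib sum_distrib_right[symmetric] sum1 sum2)
  finally have sb: "(\<Sum>A\<in>P. \<mu> A * ?g (t A)) \<le> \<mu> A0 + \<mu> (?S - A0) * (1 - \<alpha> + d)" .
  have compl: "\<mu> (?S - A0) = 1 - \<mu> A0"
  proof -
    have "\<mu> (A0 \<union> (?S - A0)) = \<mu> A0 + \<mu> (?S - A0)"
      using fa[unfolded fin_additive_on_def, rule_format, of A0 "?S - A0"] A0S by blast
    moreover have "A0 \<union> (?S - A0) = ?S" using A0S by blast
    ultimately show ?thesis using mS by simp
  qed
  have c0: "0 \<le> \<mu> (?S - A0)" using pos by blast
  have m0: "0 \<le> \<mu> A0" using pos A0S by blast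
  have dg: "d \<le> \<gamma> / 4" unfolding d_def by simp
  have "\<mu> (?S - A0) * d \<le> 1 * (\<gamma> / 4)"
  proof (rule mult_mono)
    show "\<mu> (?S - A0) \<le> 1" using compl m0 by simp
  qed (use dg d in auto)
  then have i3: "(1 - \<mu> A0) * d \<le> \<gamma> / 4" using compl by simp
  have i1: "I \<le> (\<Sum>A\<in>P. \<mu> A * ?g (t A)) + \<gamma> / 4" using close abs_ge_minus_self[of "(\<Sum>A\<in>P. \<mu> A * ?g (t A)) - I"] by linarith
  have i2: "(\<Sum>A\<in>P. \<mu> A * ?g (t A)) \<le> \<mu> A0 + (1 - \<mu> A0) * (1 - \<alpha>) + (1 - \<mu> A0) * d"
    using sb compl by (simp add: algebra_simps)
  have "I \<le> \<mu> A0 + (1 - \<mu> A0) * (1 - \<alpha>) + \<gamma> / 2"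
    using i1 i2 i3 by linarith
  moreover have "\<mu> A0 + (1 - \<mu> A0) * (1 - \<alpha>) = 1 - \<alpha> + \<alpha> * \<mu> A0"
    by (simp add: algebra_simps)
  ultimately have k1: "I \<le> 1 - \<alpha> + \<alpha> * \<mu> A0 + \<gamma> / 2" by simp
  have k2: "\<alpha> - \<alpha>\<^sup>2 < \<alpha> * \<mu> A0" using k1 gpos \<gamma>_def by linarith
  have key: "\<alpha> * (1 - \<alpha>) < \<alpha> * \<mu> A0"
    using k2 by (simp add: algebra_simps power2_eq_square)
  show ?thesis
  proof (rule ccontr)
    assume "\<not> 1 - \<alpha> \<le> \<mu> {p \<in> Mt. 1 - \<alpha> \<le> Phi f p}"
    then have "\<mu> A0 < 1 - \<alpha>" unfolding A0_def by simp
    then have "\<alpha> * \<mu> A0 < \<alpha> * (1 - \<alpha>)" using apos by simp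
    then show False using key by simp
  qed
qed

end
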